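(* Let $G$ be a convergence group. Then $\mathcal B := \{H^{\diamond} : H\subseteq\Gamma G \text{ equicontinuous}\}$ is a zero neighbourhood base of a group topology $\tau$ on $G$ with the following three properties. First, $\tau$ is locally quasi-convex. Second, the identity map from $G$ (with its convergence structure) to $(G,\tau)$ is continuous. Third, $\tau$ is finer than every locally quasi-convex group topology $\mu$ on $G$ for which the identity $G\to(G,\mu)$ is continuous. In other words, $\tau$ is the locally quasi-convex modification $\tau(G)$ of $G$.
   Context: All groups are abelian. A convergence group is an abelian group with a convergence structure (an assignment to each point $x$ of a collection of filters converging to $x$). This assignment must satisfy three conditions: point ultrafilters converge to their point; finite intersections of filters converging to $x$ converge to $x$; and finer filters converge. The group operation must be compatible: $\mathcal F\to x$, $\mathcal G\to y$ imply $\mathcal F-\mathcal G\to x-y$. Topological groups are convergence groups, with convergent filters being those finer than the neighbourhood filter. $\mathbb T=\mathbb R/\mathbb Z$, $\rho:\mathbb R\to\mathbb T$ is the quotient map, and $\mathbb T_+=\rho([-1/4,1/4])$. $\Gamma G$ is the group of continuous homomorphisms $G\to\mathbb T$. A set $M\subseteq\Gamma G$ is equicontinuous if for every filter $\mathcal F\to0$ in $G$, the filter generated by $\{\varphi(x):\varphi\in M,x\in F\}$, $F\in\mathcal F$, converges to $0$ in $\mathbb T$. For $A\subseteq G$ and $H\subseteq\Gamma G$, set $A^{\circ}=\{\varphi\in\Gamma G:\varphi(A)\subseteq\mathbb T_+\}$ and $H^{\diamond}=\{x\in G: \varphi(x)\in\mathbb T_+ \ \forall \varphi\in H\}$. A subset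 $A$ of a topological group $G$ is quasi-convex if for every $x\in G\setminus A$ there is a continuous character $\varphi$ with $\varphi(A)\subseteq\mathbb T_+$ and $\varphi(x)\notin\mathbb T_+$. A topological group is locally quasi-convex if it has a zero neighbourhood base of quasi-convex sets. The locally quasi-convex modification $\tau(G)$ of a convergence group $G$ is the finest locally quasi-convex group topology on $G$ that is coarser than the convergence structure of $G$. *)

theory Defs
  imports "HOL-Analysis.Analysis"
begin

text \<open>The circle group T = R/Z is modelled as the unit circle in the complex plane
  via the isomorphism induced by rho(t) = cis(2 pi t); the group operation of T
  corresponds to complex multiplication and 0 in T corresponds to 1.\<close>

definition rho :: "real \<Rightarrow> complex" where
  "rho t = cis (2 * pi * t)"

definition circT :: "complex set" where
  "circT = range rho"

definition circT_plus :: "complex set" where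
  "circT_plus = rho ` {-1/4..1/4}"

text \<open>Convergence structures on an abelian group (the group is the type 'a).
  conv F x means: the filter F converges to x.\<close>

definition conv_group :: "('a::ab_group_add filter \<Rightarrow> 'a \<Rightarrow> bool) \<Rightarrow> bool" where
  "conv_group conv \<longleftrightarrow>
     (\<forall>x. conv (principal {x}) x) \<and>
     (\<forall>F G x. conv F x \<and> conv G x \<longrightarrow> conv (sup F G) x) \<and>
     (\<forall>F G x. conv F x \<and> G \<le> F \<longrightarrow> conv G x) \<and>
     (\<forall>F G x y. conv F x \<and> conv G y \<longrightarrow>
        conv (filtermap (\<lambda>(a, b). a - b) (F \<times>\<^sub>F G)) (x - y))"

definition is_hom_T :: "('a::ab_group_add \<Rightarrow> complex) \<Rightarrow> bool" where
  "is_hom_T \<phi> \<longleftrightarrow> (\<forall>x. \<phi> x \<in> circT) \<and> (\<forall>x y. \<phi> (x + y) = \<phi> x * \<phi> y)"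

definition char_group :: "('a::ab_group_add filter \<Rightarrow> 'a \<Rightarrow> bool) \<Rightarrow> ('a \<Rightarrow> complex) set" where
  "char_group conv = {\<phi>. is_hom_T \<phi> \<and>
     (\<forall>F x. conv F x \<longrightarrow> filterlim \<phi> (nhds (\<phi> x)) F)}"

definition equicontinuous :: "('a::ab_group_add filter \<Rightarrow> 'a \<Rightarrow> bool) \<Rightarrow> ('a \<Rightarrow> complex) set \<Rightarrow> bool" where
  "equicontinuous conv M \<longleftrightarrow> M \<subseteq> char_group conv \<and>
     (\<forall>F. conv F 0 \<longrightarrow> filtermap (\<lambda>(\<phi>, x). \<phi> x) (principal M \<times>\<^sub>F F) \<le> nhds 1)"

definition polar_dia :: "('a \<Rightarrow> complex) set \<Rightarrow> 'a set" where
  "polar_dia H = {x. \<forall>\<phi>\<in>H. \<phi> x \<in> circT_plus}"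

definition group_topology :: "'a::ab_group_add topology \<Rightarrow> bool" where
  "group_topology \<mu> \<longleftrightarrow> topspace \<mu> = UNIV \<and>
     continuous_map (prod_topology \<mu> \<mu>) \<mu> (\<lambda>(x, y). x - y)"

definition zero_nbhd_base :: "'a::ab_group_add topology \<Rightarrow> 'a set set \<Rightarrow> bool" where
  "zero_nbhd_base \<mu> B \<longleftrightarrow>
     (\<forall>A\<in>B. \<exists>U. openin \<mu> U \<and> 0 \<in> U \<and> U \<subseteq> A) \<and>
     (\<forall>U. openin \<mu> U \<and> 0 \<in> U \<longrightarrow> (\<exists>A\<in>B. A \<subseteq> U))"

definition top_character :: "'a::ab_group_add topology \<Rightarrow> ('a \<Rightarrow> complex) \<Rightarrow> bool" where
  "top_character \<mu> \<phi> \<longleftrightarrow> is_hom_T \<phi> \<and> continuous_map \<mu> euclidean \<phi>"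

definition quasi_convex :: "'a::ab_group_add topology \<Rightarrow> 'a set \<Rightarrow> bool" where
  "quasi_convex \<mu> A \<longleftrightarrow>
     (\<forall>x. x \<notin> A \<longrightarrow> (\<exists>\<phi>. top_character \<mu> \<phi> \<and> \<phi> ` A \<subseteq> circT_plus \<and> \<phi> x \<notin> circT_plus))"

definition locally_quasi_convex :: "'a::ab_group_add topology \<Rightarrow> bool" where
  "locally_quasi_convex \<mu> \<longleftrightarrow> group_topology \<mu> \<and>
     zero_nbhd_base \<mu> {A. quasi_convex \<mu> A \<and> (\<exists>U. openin \<mu> U \<and> 0 \<in> U \<and> U \<subseteq> A)}"

definition id_continuous :: "('a filter \<Rightarrow> 'a \<Rightarrow> bool) \<Rightarrow> 'a topology \<Rightarrow> bool" where
  "id_continuous conv \<mu> \<longleftrightarrow>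
     (\<forall>F x. conv F x \<longrightarrow> (\<forall>U. openin \<mu> U \<and> x \<in> U \<longrightarrow> eventually (\<lambda>y. y \<in> U) F))"

end

theory Submission
  imports Defs
begin


lemma norm_rho[simp]: "norm (rho t) = 1"
  by (simp add: rho_def)

lemma circT_eq: "circT = {z. norm z = 1}"
proof
  show "circT \<subseteq> {z. norm z = 1}" by (auto simp: circT_def)
  show "{z. norm z = 1} \<subseteq> circT"
  proof
    fix z :: complex assume "z \<in> {z. norm z = 1}"
    hence z: "norm z = 1" by simp
    hence "z \<noteq> 0" by auto
    hence "cis (Arg z) = z" using z by (simp add: cis_Arg sgn_div_norm)
    hence "rho (Arg z / (2*pi)) = z" by (simp add: rho_def)
    thus "z \<in> circT" unfolding circT_def by (metis rangeI)
  qed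
qed

lemma circT_plus_eq: "circT_plus = {z. norm z = 1 \<and> 0 \<le> Re z}"
proof
  show "circT_plus \<subseteq> {z. norm z = 1 \<and> 0 \<le> Re z}"
  proof
    fix z assume "z \<in> circT_plus"
    then obtain t where t: "t \<in> {-1/4..1/4}" "z = rho t" by (auto simp: circT_plus_def)
    have "pi * (-1/4) \<le> pi * t" "pi * t \<le> pi * (1/4)" using t pi_gt_zero by (intro mult_left_mono; auto)+
    hence "-(pi/2) \<le> 2*pi*t" "2*pi*t \<le> pi/2" by auto
    hence "0 \<le> cos (2*pi*t)" by (rule cos_ge_zero)
    thus "z \<in> {z. norm z = 1 \<and> 0 \<le> Re z}" using t by (simp add: rho_def)
  qed
  show "{z. norm z = 1 \<and> 0 \<le> Re z} \<subseteq> circT_plus"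
  proof
    fix z :: complex assume "z \<in> {z. norm z = 1 \<and> 0 \<le> Re z}"
    hence z: "norm z = 1" "0 \<le> Re z" by auto
    hence "z \<noteq> 0" by auto
    hence c: "cis (Arg z) = z" using z by (simp add: cis_Arg sgn_div_norm)
    hence "Re z = cos (Arg z)" by (metis cis.sel(1))
    with z have cp: "0 \<le> cos (Arg z)" by simp
    have b: "- pi < Arg z" "Arg z \<le> pi" using Arg_bounded by auto
    have "Arg z \<le> pi/2"
    proof (rule ccontr)
      assume "\<not> Arg z \<le> pi/2"
      hence "cos (Arg z) < 0" using b by (intro cos_lt_zero_pi) auto
      with cp show False by simp
    qed
    moreover have "- (pi/2) \<le> Arg z"
    proof (rule ccontr)
      assume "\<not> - (pi/2) \<le> Arg z"
      hence "cos (- Arg z) < 0" using b by (intro cos_lt_zero_pi) auto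
      with cp show False by simp
    qed
    ultimately have "Arg z / (2*pi) \<in> {-1/4..1/4}" by (auto simp: field_simps)
    moreover have "rho (Arg z / (2*pi)) = z" using c by (simp add: rho_def)
    ultimately show "z \<in> circT_plus" unfolding circT_plus_def by (metis image_eqI)
  qed
qed

lemma sq_step:
  fixes z :: complex
  assumes "norm z = 1" "0 \<le> Re z"
  shows "1 - Re z \<le> (1 - Re (z^2)) / 2"
proof -
  have e: "(Re z)^2 + (Im z)^2 = 1" using assms(1) cmod_power2[of z] by simp
  have "Re z \<le> 1" using abs_Re_le_cmod[of z] assms by simp
  hence "Re z * Re z \<le> Re z * 1" using assms(2) by (intro mult_left_mono) auto
  moreover have "Re (z^2) = (Re z)^2 - (Im z)^2" by (simp add: power2_eq_square)
  ultimately show ?thesis using e by (simp add: power2_eq_square field_simps)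
qed

lemma pow2_bound:
  fixes z :: complex
  assumes "norm z = 1" "\<forall>j\<le>n. 0 \<le> Re (z^(2^j))"
  shows "1 - Re z \<le> 1 / 2^n"
  using assms
proof (induction n arbitrary: z)
  case 0
  then show ?case by simp
next
  case (Suc n)
  have "norm (z^2) = 1" using Suc.prems by (simp add: norm_power)
  moreover have "\<forall>j\<le>n. 0 \<le> Re ((z^2)^(2^j))"
  proof (intro allI impI)
    fix j assume "j \<le> n"
    hence "0 \<le> Re (z^(2^Suc j))" using Suc.prems by auto
    thus "0 \<le> Re ((z^2)^(2^j))" by (simp add: power_mult[symmetric] mult.commute)
  qed
  ultimately have "1 - Re (z^2) \<le> 1/2^n" by (rule Suc.IH)
  moreover have "1 - Re z \<le> (1 - Re (z^2)) / 2"
    using Suc.prems by (intro sq_step) (auto dest: spec[of _ 0])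
  ultimately show ?case by simp
qed

lemma norm_minus_one_sq:
  fixes z :: complex
  assumes "norm z = 1"
  shows "(norm (z - 1))^2 = 2 * (1 - Re z)"
proof -
  have e: "(Re z)^2 + (Im z)^2 = 1" using assms(1) cmod_power2[of z] by simp
  have "(norm (z - 1))^2 = (Re z - 1)^2 + (Im z)^2" by (simp add: cmod_power2)
  thus ?thesis using e by (simp add: power2_eq_square algebra_simps)
qed

lemma plus_closed:
  fixes z w :: complex
  assumes "norm z = 1" "0 \<le> Re z" "0 \<le> Re (z^2)" "norm w = 1" "0 \<le> Re w" "0 \<le> Re (w^2)"
  shows "0 \<le> Re (z * w)"
proof -
  have "(Im z)^2 \<le> (Re z)^2" using assms(3) by (simp add: power2_eq_square)
  hence "\<bar>Im z\<bar> \<le> Re z" using assms(2) by (metis abs_le_square_iff abs_of_nonneg)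
  have "(Im w)^2 \<le> (Re w)^2" using assms(6) by (simp add: power2_eq_square)
  hence "\<bar>Im w\<bar> \<le> Re w" using assms(5) by (metis abs_le_square_iff abs_of_nonneg)
  have "Im z * Im w \<le> \<bar>Im z\<bar> * \<bar>Im w\<bar>" by (metis abs_ge_self abs_mult)
  also have "\<dots> \<le> Re z * Re w" by (intro mult_mono) (use \<open>\<bar>Im z\<bar> \<le> Re z\<close> \<open>\<bar>Im w\<bar> \<le> Re w\<close> in auto)
  finally show ?thesis by simp
qed



lemma hom_norm: "is_hom_T \<phi> \<Longrightarrow> norm (\<phi> x) = 1"
  by (auto simp: is_hom_T_def circT_eq)

lemma hom_0: assumes "is_hom_T \<phi>" shows "\<phi> 0 = 1"
proof -
  have "\<phi> 0 = \<phi> 0 * \<phi> 0" using assms unfolding is_hom_T_def by (metis add_0)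
  moreover have "\<phi> 0 \<noteq> 0" using hom_norm[OF assms, of 0] by auto
  ultimately show ?thesis by (metis mult_cancel_left2)
qed

lemma hom_add: "is_hom_T \<phi> \<Longrightarrow> \<phi> (x + y) = \<phi> x * \<phi> y"
  by (simp add: is_hom_T_def)

lemma hom_neg: assumes "is_hom_T \<phi>" shows "\<phi> (- x) = inverse (\<phi> x)"
proof -
  have "\<phi> x * \<phi> (-x) = 1" using hom_add[OF assms, of x "-x"] hom_0[OF assms] by simp
  thus ?thesis by (metis inverse_unique)
qed

lemma hom_dbl: assumes "is_hom_T \<phi>" shows "\<phi> (((\<lambda>y. y + y) ^^ j) y) = \<phi> y ^ (2^j)"
proof (induction j)
  case 0 then show ?case by simp
next
  case (Suc j)
  have "\<phi> (((\<lambda>y. y + y) ^^ Suc j) y) = \<phi> (((\<lambda>y. y + y) ^^ j) y) * \<phi> (((\<lambda>y. y + y) ^^ j) y)"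
    using hom_add[OF assms] by simp
  also have "\<dots> = \<phi> y ^ (2^Suc j)" using Suc by (simp add: power_mult[symmetric] power2_eq_square[symmetric] mult.commute)
  finally show ?case .
qed

lemma hom_pow: assumes "is_hom_T \<phi>" shows "is_hom_T (\<lambda>x. \<phi> x ^ k)"
  using assms unfolding is_hom_T_def circT_eq by (auto simp: norm_power power_mult_distrib)

lemma char_hom: "\<phi> \<in> char_group conv \<Longrightarrow> is_hom_T \<phi>"
  by (simp add: char_group_def)

lemma char_pow: assumes "\<phi> \<in> char_group conv" shows "(\<lambda>x. \<phi> x ^ k) \<in> char_group conv"
  using assms hom_pow[of \<phi> k] unfolding char_group_def filterlim_def[symmetric]
  by (auto intro: tendsto_power)

lemma ev_prod_principal:
  "eventually (\<lambda>p. P (fst p) (snd p)) (principal M \<times>\<^sub>F F) \<longleftrightarrow> eventually (\<lambda>y. \<forall>\<phi>\<in>M. P \<phi> y) F"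
proof
  assume "eventually (\<lambda>p. P (fst p) (snd p)) (principal M \<times>\<^sub>F F)"
  then obtain Pf Pg where "eventually Pf (principal M)" "eventually Pg F" "\<forall>x y. Pf x \<longrightarrow> Pg y \<longrightarrow> P x y"
    unfolding eventually_prod_filter by auto
  thus "eventually (\<lambda>y. \<forall>\<phi>\<in>M. P \<phi> y) F"
    by (auto simp: eventually_principal elim: eventually_mono)
next
  assume "eventually (\<lambda>y. \<forall>\<phi>\<in>M. P \<phi> y) F"
  thus "eventually (\<lambda>p. P (fst p) (snd p)) (principal M \<times>\<^sub>F F)"
    unfolding eventually_prod_filter
    by (intro exI[of _ "\<lambda>x. x \<in> M"] exI[of _ "\<lambda>y. \<forall>\<phi>\<in>M. P \<phi> y"]) (auto simp: eventually_principal)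
qed

lemma equicontinuous_iff:
  "equicontinuous conv M \<longleftrightarrow> M \<subseteq> char_group conv \<and>
     (\<forall>F. conv F 0 \<longrightarrow> (\<forall>S. open S \<longrightarrow> 1 \<in> S \<longrightarrow> eventually (\<lambda>y. \<forall>\<phi>\<in>M. \<phi> y \<in> S) F))"
proof -
  have "filtermap (\<lambda>(\<phi>, x). \<phi> x) (principal M \<times>\<^sub>F F) \<le> nhds 1 \<longleftrightarrow>
        (\<forall>S. open S \<longrightarrow> 1 \<in> S \<longrightarrow> eventually (\<lambda>y. \<forall>\<phi>\<in>M. \<phi> y \<in> S) F)" for F
  proof -
    have "filtermap (\<lambda>(\<phi>, x). \<phi> x) (principal M \<times>\<^sub>F F) \<le> nhds 1 \<longleftrightarrow>
       (\<forall>S. open S \<longrightarrow> 1 \<in> S \<longrightarrow> eventually (\<lambda>p. (fst p) (snd p) \<in> S) (principal M \<times>\<^sub>F F))"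
      unfolding filterlim_def[symmetric] tendsto_def by (simp add: case_prod_beta)
    also have "\<dots> \<longleftrightarrow> (\<forall>S. open S \<longrightarrow> 1 \<in> S \<longrightarrow> eventually (\<lambda>y. \<forall>\<phi>\<in>M. \<phi> y \<in> S) F)"
      using ev_prod_principal[of "\<lambda>\<phi> y. \<phi> y \<in> _" M F] by simp
    finally show ?thesis .
  qed
  thus ?thesis unfolding equicontinuous_def by auto
qed

definition EQ :: "('a::ab_group_add filter \<Rightarrow> 'a \<Rightarrow> bool) \<Rightarrow> ('a \<Rightarrow> complex) set set" where
  "EQ conv = {H. H \<subseteq> char_group conv \<and> equicontinuous conv H}"

lemma EQ_iff: "H \<in> EQ conv \<longleftrightarrow> H \<subseteq> char_group conv \<and>
     (\<forall>F. conv F 0 \<longrightarrow> (\<forall>S. open S \<longrightarrow> 1 \<in> S \<longrightarrow> eventually (\<lambda>y. \<forall>\<phi>\<in>H. \<phi> y \<in> S) F))"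
  unfolding EQ_def equicontinuous_iff by auto

lemma EQ_empty: "{} \<in> EQ conv"
  unfolding EQ_iff by auto

lemma EQ_Un: assumes "H \<in> EQ conv" "K \<in> EQ conv" shows "H \<union> K \<in> EQ conv"
  unfolding EQ_iff
proof (intro conjI allI impI)
  show "H \<union> K \<subseteq> char_group conv" using assms by (auto simp: EQ_def)
  fix F S assume "conv F 0" "open S" "(1::complex) \<in> S"
  hence "eventually (\<lambda>y. \<forall>\<phi>\<in>H. \<phi> y \<in> S) F" "eventually (\<lambda>y. \<forall>\<phi>\<in>K. \<phi> y \<in> S) F"
    using assms unfolding EQ_iff by blast+
  thus "eventually (\<lambda>y. \<forall>\<phi>\<in>H \<union> K. \<phi> y \<in> S) F" by eventually_elim auto
qed

lemma EQ_finite: fixes conv :: "'a::ab_group_add filter \<Rightarrow> 'a \<Rightarrow> bool" assumes "finite H" "H \<subseteq> char_group conv" shows "H \<in> EQ conv"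
  unfolding EQ_iff
proof (intro conjI assms allI impI)
  fix F S assume F: "conv F 0" and S: "open S" "(1::complex) \<in> S"
  have "eventually (\<lambda>y. \<phi> y \<in> S) F" if "\<phi> \<in> H" for \<phi>
  proof -
    have "\<phi> \<in> char_group conv" using that assms by auto
    hence "(\<phi> \<longlongrightarrow> \<phi> 0) F" "\<phi> 0 = 1" using F hom_0[OF char_hom] by (auto simp: char_group_def filterlim_def)
    thus ?thesis using S by (auto simp: tendsto_def)
  qed
  thus "eventually (\<lambda>y. \<forall>\<phi>\<in>H. \<phi> y \<in> S) F" using assms(1) by (simp add: eventually_ball_finite)
qed

lemma EQ_sq: assumes "H \<in> EQ conv" shows "(\<lambda>\<phi> x. \<phi> x ^ 2) ` H \<in> EQ conv"
  unfolding EQ_iff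
proof (intro conjI allI impI)
  show "(\<lambda>\<phi> x. \<phi> x ^ 2) ` H \<subseteq> char_group conv" using assms char_pow unfolding EQ_def by blast
  fix F S assume F: "conv F 0" and S: "open S" "(1::complex) \<in> S"
  have "open ((\<lambda>z::complex. z^2) -` S)" using S by (intro open_vimage continuous_intros)
  moreover have "1 \<in> (\<lambda>z::complex. z^2) -` S" using S by simp
  ultimately have "eventually (\<lambda>y. \<forall>\<phi>\<in>H. \<phi> y \<in> (\<lambda>z::complex. z^2) -` S) F"
    using assms F unfolding EQ_iff by blast
  thus "eventually (\<lambda>y. \<forall>\<phi>\<in>(\<lambda>\<phi> x. \<phi> x ^ 2) ` H. \<phi> y \<in> S) F" by (auto elim: eventually_mono)
qed

lemma EQ_char: "H \<in> EQ conv \<Longrightarrow> \<phi> \<in> H \<Longrightarrow> is_hom_T \<phi>"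
  by (auto simp: EQ_def char_group_def)

lemma polar_Un: "polar_dia (A \<union> B) = polar_dia A \<inter> polar_dia B"
  by (auto simp: polar_dia_def)

lemma polar_empty: "polar_dia {} = UNIV"
  by (auto simp: polar_dia_def)

lemma polar_zero: "H \<in> EQ conv \<Longrightarrow> 0 \<in> polar_dia H"
  by (auto simp: polar_dia_def circT_plus_eq hom_0 dest: EQ_char)

lemma polar_neg: assumes "H \<in> EQ conv" "x \<in> polar_dia H" shows "- x \<in> polar_dia H"
  unfolding polar_dia_def
proof (intro CollectI ballI)
  fix \<phi> assume p: "\<phi> \<in> H"
  hence h: "is_hom_T \<phi>" using assms EQ_char by blast
  have "norm (\<phi> x) = 1" "0 \<le> Re (\<phi> x)" using assms p by (auto simp: polar_dia_def circT_plus_eq)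
  moreover have "inverse (\<phi> x) = cnj (\<phi> x)"
  proof -
    have "\<phi> x * cnj (\<phi> x) = 1" using complex_norm_square[of "\<phi> x"] \<open>norm (\<phi> x) = 1\<close> by simp
    thus ?thesis by (metis inverse_unique)
  qed
  ultimately show "\<phi> (- x) \<in> circT_plus" using hom_neg[OF h] by (simp add: circT_plus_eq)
qed

definition sqH :: "('a \<Rightarrow> complex) set \<Rightarrow> ('a \<Rightarrow> complex) set" where
  "sqH H = H \<union> (\<lambda>\<phi> x. \<phi> x ^ 2) ` H"

lemma EQ_sqH: "H \<in> EQ conv \<Longrightarrow> sqH H \<in> EQ conv"
  unfolding sqH_def by (intro EQ_Un EQ_sq)

lemma polar_add: assumes "H \<in> EQ conv" "x \<in> polar_dia (sqH H)" "y \<in> polar_dia (sqH H)"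
  shows "x + y \<in> polar_dia H"
  unfolding polar_dia_def
proof (intro CollectI ballI)
  fix \<phi> assume p: "\<phi> \<in> H"
  hence h: "is_hom_T \<phi>" using assms EQ_char by blast
  have "\<phi> x \<in> circT_plus" "(\<phi> x)^2 \<in> circT_plus" "\<phi> y \<in> circT_plus" "(\<phi> y)^2 \<in> circT_plus"
    using assms(2,3) p by (auto simp: polar_dia_def sqH_def)
  hence "0 \<le> Re (\<phi> x * \<phi> y)" by (intro plus_closed) (auto simp: circT_plus_eq)
  thus "\<phi> (x + y) \<in> circT_plus" using hom_add[OF h] hom_norm[OF h] by (simp add: circT_plus_eq norm_mult)
qed



definition opnT :: "('a::ab_group_add filter \<Rightarrow> 'a \<Rightarrow> bool) \<Rightarrow> 'a set \<Rightarrow> bool" where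
  "opnT conv U \<longleftrightarrow> (\<forall>x\<in>U. \<exists>H\<in>EQ conv. \<forall>y\<in>polar_dia H. x + y \<in> U)"

lemma istopology_opnT: "istopology (opnT conv)"
  unfolding istopology_def
proof (intro conjI allI impI)
  fix S T assume S: "opnT conv S" and T: "opnT conv T"
  show "opnT conv (S \<inter> T)" unfolding opnT_def
  proof
    fix x assume "x \<in> S \<inter> T"
    then obtain H K where "H \<in> EQ conv" "\<forall>y\<in>polar_dia H. x + y \<in> S" "K \<in> EQ conv" "\<forall>y\<in>polar_dia K. x + y \<in> T"
      using S T unfolding opnT_def by blast
    moreover have "H \<union> K \<in> EQ conv" using EQ_Un \<open>H \<in> EQ conv\<close> \<open>K \<in> EQ conv\<close> by blast
    ultimately show "\<exists>H\<in>EQ conv. \<forall>y\<in>polar_dia H. x + y \<in> S \<inter> T"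
      by (intro bexI[of _ "H \<union> K"]) (auto simp: polar_Un)
  qed
next
  fix \<K> assume "\<forall>K\<in>\<K>. opnT conv K"
  show "opnT conv (\<Union>\<K>)" unfolding opnT_def
  proof
    fix x assume "x \<in> \<Union>\<K>"
    then obtain K where K: "K \<in> \<K>" "x \<in> K" by blast
    hence "opnT conv K" using \<open>\<forall>K\<in>\<K>. opnT conv K\<close> by blast
    then obtain H where "H \<in> EQ conv" "\<forall>y\<in>polar_dia H. x + y \<in> K" using K unfolding opnT_def by blast
    thus "\<exists>H\<in>EQ conv. \<forall>y\<in>polar_dia H. x + y \<in> \<Union>\<K>" using K by blast
  qed
qed

definition tau where "tau conv = topology (opnT conv)"

lemma openin_tau: "openin (tau conv) = opnT conv"
  unfolding tau_def by (rule topology_inverse'[OF istopology_opnT])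

lemma opnT_UNIV: "opnT conv UNIV"
  unfolding opnT_def using EQ_empty by blast

lemma topspace_tau: "topspace (tau conv) = UNIV"
  unfolding topspace_def openin_tau using opnT_UNIV by blast

definition nbV where "nbV conv x H = {z. \<exists>K\<in>EQ conv. \<forall>w\<in>polar_dia K. z + w - x \<in> polar_dia H}"

lemma nbV_open: assumes "H \<in> EQ conv" shows "opnT conv (nbV conv x H)"
  unfolding opnT_def
proof
  fix z assume "z \<in> nbV conv x H"
  then obtain K where K: "K \<in> EQ conv" "\<And>w. w \<in> polar_dia K \<Longrightarrow> z + w - x \<in> polar_dia H"
    unfolding nbV_def by auto
  have K2: "sqH K \<in> EQ conv" by (rule EQ_sqH[OF K(1)])
  have "z + y \<in> nbV conv x H" if y: "y \<in> polar_dia (sqH K)" for y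
  proof -
    have "z + y + w - x \<in> polar_dia H" if w: "w \<in> polar_dia (sqH K)" for w
    proof -
      have "y + w \<in> polar_dia K" by (rule polar_add[OF K(1) y w])
      hence "z + (y + w) - x \<in> polar_dia H" by (rule K(2))
      thus ?thesis by (simp add: add.assoc)
    qed
    thus ?thesis unfolding nbV_def using K2 by blast
  qed
  thus "\<exists>H'\<in>EQ conv. \<forall>y\<in>polar_dia H'. z + y \<in> nbV conv x H" using K2 by blast
qed


lemma nbV_mem: "H \<in> EQ conv \<Longrightarrow> x \<in> nbV conv x H"
  unfolding nbV_def by auto

lemma nbV_sub: "z \<in> nbV conv x H \<Longrightarrow> z - x \<in> polar_dia H"
  unfolding nbV_def using polar_zero by fastforce

lemma diff_open: assumes U: "openin (tau conv) U"
  shows "openin (prod_topology (tau conv) (tau conv)) {p. fst p - snd p \<in> U}"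
    unfolding openin_prod_topology_alt
  proof (intro allI impI)
    fix x y assume "(x, y) \<in> {p. fst p - snd p \<in> U}"
    hence "x - y \<in> U" by simp
    then obtain H where H: "H \<in> EQ conv" "\<forall>w\<in>polar_dia H. x - y + w \<in> U" using U unfolding openin_tau opnT_def by blast
    define K where "K = sqH H"
    have K: "K \<in> EQ conv" using EQ_sqH[OF H(1)] K_def by simp
    have "nbV conv x K \<times> nbV conv y K \<subseteq> {p. fst p - snd p \<in> U}"
    proof clarsimp
      fix a b assume "a \<in> nbV conv x K" "b \<in> nbV conv y K"
      hence "a - x \<in> polar_dia K" "- (b - y) \<in> polar_dia K" using nbV_sub polar_neg[OF K] by blast+
      hence "(a - x) + - (b - y) \<in> polar_dia H" using polar_add[OF H(1)] K_def by blast
      hence "x - y + ((a - x) + - (b - y)) \<in> U" using H by blast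
      thus "a - b \<in> U" by (simp add: algebra_simps)
    qed
    note f1 = this
    have f2: "openin (tau conv) (nbV conv x K)" "openin (tau conv) (nbV conv y K)"
      unfolding openin_tau by (rule nbV_open[OF K])+
    have f3: "x \<in> nbV conv x K" "y \<in> nbV conv y K" by (rule nbV_mem[OF K])+
    show "\<exists>U' V. openin (tau conv) U' \<and> openin (tau conv) V \<and> x \<in> U' \<and> y \<in> V \<and> U' \<times> V \<subseteq> {p. fst p - snd p \<in> U}"
      by (rule exI[where x="nbV conv x K"], rule exI[where x="nbV conv y K"], (intro conjI; fact))
  qed

lemma group_topology_tau: "group_topology (tau conv)"
  unfolding group_topology_def continuous_map_def
proof (intro conjI topspace_tau allI impI)
  show "(\<lambda>(x, y). x - y) \<in> topspace (prod_topology (tau conv) (tau conv)) \<rightarrow> topspace (tau conv)"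
    by (simp add: topspace_tau)
  fix U assume "openin (tau conv) U"
  hence "openin (prod_topology (tau conv) (tau conv)) {p. fst p - snd p \<in> U}" by (rule diff_open)
  moreover have "{p \<in> topspace (prod_topology (tau conv) (tau conv)). (\<lambda>(x, y). x - y) p \<in> U} = {p. fst p - snd p \<in> U}"
    by (auto simp: topspace_tau)
  ultimately show "openin (prod_topology (tau conv) (tau conv)) {p \<in> topspace (prod_topology (tau conv) (tau conv)). (\<lambda>(x, y). x - y) p \<in> U}"
    by simp
qed



lemma small_lemma:
  fixes z :: complex
  assumes "norm z = 1" "\<forall>j\<le>n. 0 \<le> Re (z^(2^j))" "2 / \<epsilon>^2 < 2^n" "0 < \<epsilon>"
  shows "norm (z - 1) < \<epsilon>"
proof -
  have "1 - Re z \<le> 1/2^n" by (rule pow2_bound[OF assms(1,2)])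
  hence "2 * (1 - Re z) \<le> 2 * (1/2^n)" by (rule mult_left_mono) auto
  hence "(norm (z - 1))^2 \<le> 2/2^n" using norm_minus_one_sq[OF assms(1)] by simp
  also have "2/2^n < \<epsilon>^2" using assms(3,4) by (simp add: field_simps)
  finally have "(norm (z - 1))^2 < \<epsilon>^2" .
  thus ?thesis using assms(4) by (simp add: power_less_imp_less_base)
qed

lemma exists_n: assumes "0 < (\<epsilon>::real)" shows "\<exists>n. 2 / \<epsilon>^2 < 2^n"
  using real_arch_pow[of 2 "2/\<epsilon>^2"] by simp

lemma char_top_character:
  fixes conv :: "'a::ab_group_add filter \<Rightarrow> 'a \<Rightarrow> bool"
  assumes "\<phi> \<in> char_group conv"
  shows "top_character (tau conv) \<phi>"
  unfolding top_character_def continuous_map_def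
proof (intro conjI allI impI)
  have h: "is_hom_T \<phi>" by (rule char_hom[OF assms])
  show "is_hom_T \<phi>" by (fact h)
  show "\<phi> \<in> topspace (tau conv) \<rightarrow> topspace euclidean" by simp
  fix S :: "complex set" assume "openin euclidean S"
  hence S: "open S" by (simp only: open_openin)
  have "opnT conv {x. \<phi> x \<in> S}" unfolding opnT_def
  proof
    fix x assume "x \<in> {x. \<phi> x \<in> S}"
    then obtain \<epsilon> where e: "0 < \<epsilon>" "ball (\<phi> x) \<epsilon> \<subseteq> S" using S open_contains_ball by blast
    obtain n where n: "2 / \<epsilon>^2 < 2^n" using exists_n[OF e(1)] by blast
    define K where "K = (\<lambda>j y. \<phi> y ^ (2^j)) ` {..n}"
    have K: "K \<in> EQ conv" unfolding K_def
      by (rule EQ_finite) (use char_pow[OF assms] in auto)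
    have "x + w \<in> {x. \<phi> x \<in> S}" if w: "w \<in> polar_dia K" for w
    proof -
      have "\<forall>j\<le>n. 0 \<le> Re (\<phi> w ^ (2^j))"
      proof (intro allI impI)
        fix j assume "j \<le> n"
        hence "(\<lambda>y. \<phi> y ^ (2^j)) \<in> K" unfolding K_def by auto
        hence "\<phi> w ^ (2^j) \<in> circT_plus" using w unfolding polar_dia_def by auto
        thus "0 \<le> Re (\<phi> w ^ (2^j))" by (simp add: circT_plus_eq)
      qed
      hence "norm (\<phi> w - 1) < \<epsilon>" using small_lemma[OF hom_norm[OF h] _ n e(1)] by blast
      moreover have "dist (\<phi> x) (\<phi> (x + w)) = norm (\<phi> w - 1)"
      proof -
        have "\<phi> x - \<phi> (x + w) = \<phi> x * (1 - \<phi> w)" using hom_add[OF h, of x w] by (simp add: algebra_simps)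
        hence "dist (\<phi> x) (\<phi> (x + w)) = norm (\<phi> x) * norm (1 - \<phi> w)" by (simp add: dist_norm norm_mult)
        thus ?thesis using hom_norm[OF h, of x] by (simp add: norm_minus_commute)
      qed
      ultimately have "\<phi> (x + w) \<in> ball (\<phi> x) \<epsilon>" by simp
      thus ?thesis using e(2) by auto
    qed
    thus "\<exists>H\<in>EQ conv. \<forall>y\<in>polar_dia H. x + y \<in> {x. \<phi> x \<in> S}" using K by blast
  qed
  thus "openin (tau conv) {x \<in> topspace (tau conv). \<phi> x \<in> S}"
    by (simp add: openin_tau topspace_tau)
qed

lemma polar_qc:
  fixes conv :: "'a::ab_group_add filter \<Rightarrow> 'a \<Rightarrow> bool"
  assumes "H \<in> EQ conv"
  shows "quasi_convex (tau conv) (polar_dia H)"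
  unfolding quasi_convex_def
proof (intro allI impI)
  fix x assume "x \<notin> polar_dia H"
  then obtain \<phi> where p: "\<phi> \<in> H" "\<phi> x \<notin> circT_plus" unfolding polar_dia_def by auto
  have "top_character (tau conv) \<phi>" using p assms char_top_character unfolding EQ_def by blast
  moreover have "\<phi> ` polar_dia H \<subseteq> circT_plus" using p unfolding polar_dia_def by auto
  ultimately show "\<exists>\<phi>. top_character (tau conv) \<phi> \<and> \<phi> ` polar_dia H \<subseteq> circT_plus \<and> \<phi> x \<notin> circT_plus"
    using p by blast
qed

lemma polar_nb:
  assumes "H \<in> EQ conv"
  shows "openin (tau conv) (nbV conv 0 H) \<and> 0 \<in> nbV conv 0 H \<and> nbV conv 0 H \<subseteq> polar_dia H"
  using nbV_open[OF assms] nbV_mem[OF assms] nbV_sub[of _ conv 0 H] by (auto simp: openin_tau)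

lemma open_has_polar:
  assumes "openin (tau conv) U" "0 \<in> U"
  shows "\<exists>H\<in>EQ conv. polar_dia H \<subseteq> U"
proof -
  obtain H where "H \<in> EQ conv" "\<forall>y\<in>polar_dia H. 0 + y \<in> U"
    using assms unfolding openin_tau opnT_def by blast
  thus ?thesis by auto
qed

lemma tau_base: "zero_nbhd_base (tau conv) {polar_dia H | H. H \<subseteq> char_group conv \<and> equicontinuous conv H}"
  unfolding zero_nbhd_base_def
proof (intro conjI ballI allI impI)
  fix A assume "A \<in> {polar_dia H | H. H \<subseteq> char_group conv \<and> equicontinuous conv H}"
  then obtain H where "H \<in> EQ conv" "A = polar_dia H" unfolding EQ_def by auto
  thus "\<exists>U. openin (tau conv) U \<and> 0 \<in> U \<and> U \<subseteq> A" using polar_nb by blast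
next
  fix U assume "openin (tau conv) U \<and> 0 \<in> U"
  then obtain H where "H \<in> EQ conv" "polar_dia H \<subseteq> U" using open_has_polar by blast
  thus "\<exists>A\<in>{polar_dia H | H. H \<subseteq> char_group conv \<and> equicontinuous conv H}. A \<subseteq> U"
    unfolding EQ_def by blast
qed

lemma tau_lqc: "locally_quasi_convex (tau conv)"
  unfolding locally_quasi_convex_def zero_nbhd_base_def
proof (intro conjI group_topology_tau ballI allI impI)
  fix A assume "A \<in> {A. quasi_convex (tau conv) A \<and> (\<exists>U. openin (tau conv) U \<and> 0 \<in> U \<and> U \<subseteq> A)}"
  thus "\<exists>U. openin (tau conv) U \<and> 0 \<in> U \<and> U \<subseteq> A" by blast
next
  fix U assume "openin (tau conv) U \<and> 0 \<in> U"
  then obtain H where H: "H \<in> EQ conv" "polar_dia H \<subseteq> U" using open_has_polar by blast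
  have "polar_dia H \<in> {A. quasi_convex (tau conv) A \<and> (\<exists>U. openin (tau conv) U \<and> 0 \<in> U \<and> U \<subseteq> A)}"
    using polar_qc[OF H(1)] polar_nb[OF H(1)] by blast
  thus "\<exists>A\<in>{A. quasi_convex (tau conv) A \<and> (\<exists>U. openin (tau conv) U \<and> 0 \<in> U \<and> U \<subseteq> A)}. A \<subseteq> U"
    using H(2) by blast
qed

lemma tau_idcont:
  fixes conv :: "'a::ab_group_add filter \<Rightarrow> 'a \<Rightarrow> bool"
  assumes cg: "conv_group conv"
  shows "id_continuous conv (tau conv)"
  unfolding id_continuous_def
proof (intro allI impI)
  fix F x U assume F: "conv F x" and U: "openin (tau conv) U \<and> x \<in> U"
  then obtain H where H: "H \<in> EQ conv" "\<forall>y\<in>polar_dia H. x + y \<in> U" unfolding openin_tau opnT_def by blast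
  have "conv (principal {x}) x" using cg unfolding conv_group_def by blast
  hence "conv (filtermap (\<lambda>(a, b). a - b) (F \<times>\<^sub>F principal {x})) (x - x)"
    using cg F unfolding conv_group_def by blast
  hence c0: "conv (filtermap (\<lambda>(a, b). a - b) (F \<times>\<^sub>F principal {x})) 0" by simp
  have "eventually (\<lambda>y. \<forall>\<phi>\<in>H. \<phi> y \<in> {z. Re z > 0}) (filtermap (\<lambda>(a, b). a - b) (F \<times>\<^sub>F principal {x}))"
    using H(1) c0 open_halfspace_Re_gt[of 0] unfolding EQ_iff by force
  hence "eventually (\<lambda>p. \<forall>\<phi>\<in>H. 0 < Re (\<phi> (fst p - snd p))) (F \<times>\<^sub>F principal {x})"
    by (simp add: eventually_filtermap case_prod_beta)
  then obtain Pf Pg where P: "eventually Pf F" "eventually Pg (principal {x})"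
    "\<forall>a b. Pf a \<longrightarrow> Pg b \<longrightarrow> (\<forall>\<phi>\<in>H. 0 < Re (\<phi> (a - b)))"
    unfolding eventually_prod_filter by auto
  have "Pg x" using P(2) by (simp add: eventually_principal)
  show "eventually (\<lambda>y. y \<in> U) F" using P(1)
  proof (rule eventually_mono)
    fix y assume "Pf y"
    hence "\<forall>\<phi>\<in>H. 0 < Re (\<phi> (y - x))" using P(3) \<open>Pg x\<close> by blast
    hence "y - x \<in> polar_dia H" using H(1) EQ_char hom_norm
      unfolding polar_dia_def circT_plus_eq by fastforce
    hence "x + (y - x) \<in> U" using H(2) by blast
    thus "y \<in> U" by simp
  qed
qed



lemma cm_diff:
  assumes "group_topology \<mu>" "continuous_map \<mu> \<mu> f" "continuous_map \<mu> \<mu> g"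
  shows "continuous_map \<mu> \<mu> (\<lambda>z. f z - g z)"
proof -
  have "continuous_map \<mu> (prod_topology \<mu> \<mu>) (\<lambda>z. (f z, g z))"
    using assms(2,3) by (rule continuous_map_pairedI)
  moreover have "continuous_map (prod_topology \<mu> \<mu>) \<mu> (\<lambda>(x, y). x - y)"
    using assms(1) unfolding group_topology_def by blast
  ultimately have "continuous_map \<mu> \<mu> ((\<lambda>(x, y). x - y) \<circ> (\<lambda>z. (f z, g z)))"
    by (rule continuous_map_compose)
  thus ?thesis by (simp add: o_def)
qed

lemma cm_const: "group_topology \<mu> \<Longrightarrow> continuous_map \<mu> \<mu> (\<lambda>z. c)"
  unfolding group_topology_def by simp

lemma cm_id: "continuous_map \<mu> \<mu> (\<lambda>z. z)"
  using continuous_map_id unfolding id_def .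

lemma open_preimage:
  assumes "group_topology \<mu>" "continuous_map \<mu> \<mu> f" "openin \<mu> U"
  shows "openin \<mu> {z. f z \<in> U}"
proof -
  have "openin \<mu> {z \<in> topspace \<mu>. f z \<in> U}" using assms(2,3) by (rule openin_continuous_map_preimage)
  thus ?thesis using assms(1) unfolding group_topology_def by simp
qed

lemma cm_transl: assumes "group_topology \<mu>" shows "continuous_map \<mu> \<mu> (\<lambda>z. x + z)"
proof -
  have "continuous_map \<mu> \<mu> (\<lambda>z. z - (- x))"
    by (rule cm_diff[OF assms cm_id cm_const[OF assms]])
  thus ?thesis by (simp add: add.commute)
qed

lemma cm_dbl: assumes "group_topology \<mu>" shows "continuous_map \<mu> \<mu> (\<lambda>z. z + z)"
proof -
  have "continuous_map \<mu> \<mu> (\<lambda>z. 0 - z)"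
    by (rule cm_diff[OF assms cm_const[OF assms] cm_id])
  hence "continuous_map \<mu> \<mu> (\<lambda>z. z - (0 - z))"
    by (rule cm_diff[OF assms cm_id])
  thus ?thesis by simp
qed

lemma dbl_chain:
  fixes W :: "'a::ab_group_add set"
  defines "Wn \<equiv> rec_nat W (\<lambda>_ V. V \<inter> {y. y + y \<in> V})"
  shows "y \<in> Wn k \<Longrightarrow> j \<le> k \<Longrightarrow> ((\<lambda>y. y + y) ^^ j) y \<in> W"
proof (induction k arbitrary: y j)
  case 0
  then show ?case by (simp add: Wn_def)
next
  case (Suc k)
  have y: "y \<in> Wn k" "y + y \<in> Wn k" using Suc.prems(1) by (simp_all add: Wn_def)
  show ?case
  proof (cases j)
    case 0
    then show ?thesis using Suc.IH[OF y(1), of 0] by simp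
  next
    case (Suc j')
    hence "j' \<le> k" using Suc.prems(2) by simp
    hence "((\<lambda>y. y + y) ^^ j') (y + y) \<in> W" using Suc.IH[OF y(2)] by blast
    moreover have "((\<lambda>y. y + y) ^^ Suc j') y = ((\<lambda>y. y + y) ^^ j') (y + y)"
      by (simp only: funpow_Suc_right o_def)
    ultimately show ?thesis using Suc by simp
  qed
qed

lemma dbl_chain_open:
  fixes W :: "'a::ab_group_add set"
  assumes "group_topology \<mu>" "openin \<mu> W" "0 \<in> W"
  defines "Wn \<equiv> rec_nat W (\<lambda>_ V. V \<inter> {y. y + y \<in> V})"
  shows "openin \<mu> (Wn k) \<and> 0 \<in> Wn k"
proof (induction k)
  case 0
  then show ?case using assms by (simp add: Wn_def)
next
  case (Suc k)
  have "openin \<mu> {y. y + y \<in> Wn k}" using open_preimage[OF assms(1) cm_dbl[OF assms(1)]] Suc by blast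
  hence "openin \<mu> (Wn k \<inter> {y. y + y \<in> Wn k})" using Suc by (intro openin_Int) auto
  moreover have "Wn (Suc k) = Wn k \<inter> {y. y + y \<in> Wn k}" by (simp add: Wn_def)
  ultimately show ?case using Suc by simp
qed

lemma maximal:
  fixes conv :: "'a::ab_group_add filter \<Rightarrow> 'a \<Rightarrow> bool"
  assumes gt: "group_topology \<mu>" and lqc: "locally_quasi_convex \<mu>" and idc: "id_continuous conv \<mu>"
    and U: "openin \<mu> U"
  shows "openin (tau conv) U"
  unfolding openin_tau opnT_def
proof
  fix x assume "x \<in> U"
  have "openin \<mu> {z. x + z \<in> U}" by (rule open_preimage[OF gt cm_transl[OF gt] U])
  moreover have "0 \<in> {z. x + z \<in> U}" using \<open>x \<in> U\<close> by simp
  moreover have zb: "zero_nbhd_base \<mu> {A. quasi_convex \<mu> A \<and> (\<exists>U. openin \<mu> U \<and> 0 \<in> U \<and> U \<subseteq> A)}"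
    using lqc unfolding locally_quasi_convex_def by (rule conjunct2)
  ultimately have "\<exists>A\<in>{A. quasi_convex \<mu> A \<and> (\<exists>U. openin \<mu> U \<and> 0 \<in> U \<and> U \<subseteq> A)}. A \<subseteq> {z. x + z \<in> U}"
    unfolding zero_nbhd_base_def by (elim conjE allE impE) (rule conjI)
  then obtain A W where A: "quasi_convex \<mu> A" "openin \<mu> W" "0 \<in> W" "W \<subseteq> A" "A \<subseteq> {z. x + z \<in> U}"
    by blast
  define H where "H = {\<phi>. top_character \<mu> \<phi> \<and> \<phi> ` A \<subseteq> circT_plus}"
  have PA: "polar_dia H \<subseteq> A"
  proof
    fix y assume y: "y \<in> polar_dia H"
    show "y \<in> A"
    proof (rule ccontr)
      assume "y \<notin> A"
      then obtain \<phi> where "top_character \<mu> \<phi>" "\<phi> ` A \<subseteq> circT_plus" "\<phi> y \<notin> circT_plus"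
        using A(1) unfolding quasi_convex_def by blast
      thus False using y unfolding H_def polar_dia_def by blast
    qed
  qed
  have Hc: "H \<subseteq> char_group conv"
  proof
    fix \<phi> assume "\<phi> \<in> H"
    hence h: "is_hom_T \<phi>" and c: "continuous_map \<mu> euclidean \<phi>" unfolding H_def top_character_def by auto
    have "filterlim \<phi> (nhds (\<phi> y)) F" if F: "conv F y" for F y
      unfolding filterlim_def[symmetric] tendsto_def
    proof (intro allI impI)
      fix S :: "complex set" assume S: "open S" "\<phi> y \<in> S"
      have "openin euclidean S" using S(1) by (simp only: open_openin)
      hence "openin \<mu> {z \<in> topspace \<mu>. \<phi> z \<in> S}" by (rule openin_continuous_map_preimage[OF c])
      moreover have "topspace \<mu> = UNIV" using gt unfolding group_topology_def by blast
      ultimately have "openin \<mu> {z. \<phi> z \<in> S}" by simp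
      moreover have "y \<in> {z. \<phi> z \<in> S}" using S(2) by simp
      ultimately have "eventually (\<lambda>z. z \<in> {z. \<phi> z \<in> S}) F"
        using idc[unfolded id_continuous_def, rule_format, OF F] by blast
      thus "eventually (\<lambda>z. \<phi> z \<in> S) F" by simp
    qed
    thus "\<phi> \<in> char_group conv" using h unfolding char_group_def by (simp add: filterlim_def)
  qed
  have HE: "H \<in> EQ conv"
    unfolding EQ_iff
  proof (intro conjI Hc allI impI)
    fix F S assume F: "conv F 0" and S: "open S" "(1::complex) \<in> S"
    obtain \<epsilon> where e: "0 < \<epsilon>" "ball 1 \<epsilon> \<subseteq> S" using S open_contains_ball_eq by blast
    obtain n where n: "2 / \<epsilon>^2 < 2^n" using exists_n[OF e(1)] by blast
    define Wn where "Wn = rec_nat W (\<lambda>_ V. V \<inter> {y. y + y \<in> V})"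
    have Wo: "openin \<mu> (Wn n)" "0 \<in> Wn n" using dbl_chain_open[OF gt A(2,3)] unfolding Wn_def by auto
    have ev: "eventually (\<lambda>y. y \<in> Wn n) F" using idc[unfolded id_continuous_def, rule_format, OF F] Wo by blast
    show "eventually (\<lambda>y. \<forall>\<phi>\<in>H. \<phi> y \<in> S) F" using ev
    proof (rule eventually_mono)
      fix y assume y: "y \<in> Wn n"
      show "\<forall>\<phi>\<in>H. \<phi> y \<in> S"
      proof
        fix \<phi> assume p: "\<phi> \<in> H"
        hence h: "is_hom_T \<phi>" and pA: "\<phi> ` A \<subseteq> circT_plus" unfolding H_def top_character_def by auto
        have "\<forall>j\<le>n. 0 \<le> Re (\<phi> y ^ (2^j))"
        proof (intro allI impI)
          fix j assume "j \<le> n"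
          hence "((\<lambda>y. y + y) ^^ j) y \<in> W" using dbl_chain[of y W n j] y unfolding Wn_def by blast
          hence "\<phi> (((\<lambda>y. y + y) ^^ j) y) \<in> circT_plus" using A(4) pA by blast
          thus "0 \<le> Re (\<phi> y ^ (2^j))" using hom_dbl[OF h] by (simp add: circT_plus_eq)
        qed
        hence "norm (\<phi> y - 1) < \<epsilon>" using small_lemma[OF hom_norm[OF h] _ n e(1)] by blast
        hence "\<phi> y \<in> ball 1 \<epsilon>" by (simp add: dist_norm norm_minus_commute)
        thus "\<phi> y \<in> S" using e(2) by blast
      qed
    qed
  qed
  show "\<exists>H\<in>EQ conv. \<forall>y\<in>polar_dia H. x + y \<in> U"
    using HE PA A(5) by blast
qed

theorem theorem2p10:
  fixes conv :: "'a::ab_group_add filter \<Rightarrow> 'a \<Rightarrow> bool"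
  assumes "conv_group conv"
  shows "\<exists>\<tau>. group_topology \<tau> \<and>
     zero_nbhd_base \<tau> {polar_dia H | H. H \<subseteq> char_group conv \<and> equicontinuous conv H} \<and>
     locally_quasi_convex \<tau> \<and>
     id_continuous conv \<tau> \<and>
     (\<forall>\<mu>. group_topology \<mu> \<and> locally_quasi_convex \<mu> \<and> id_continuous conv \<mu> \<longrightarrow>
          (\<forall>U. openin \<mu> U \<longrightarrow> openin \<tau> U))"
proof (intro exI[of _ "tau conv"] conjI allI impI)
  show "group_topology (tau conv)" by (rule group_topology_tau)
  show "zero_nbhd_base (tau conv) {polar_dia H | H. H \<subseteq> char_group conv \<and> equicontinuous conv H}"
    by (rule tau_base)
  show "locally_quasi_convex (tau conv)" by (rule tau_lqc)
  show "id_continuous conv (tau conv)" by (rule tau_idcont[OF assms])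
  fix \<mu> U assume "group_topology \<mu> \<and> locally_quasi_convex \<mu> \<and> id_continuous conv \<mu>" "openin \<mu> U"
  thus "openin (tau conv) U" using maximal[of \<mu> conv U] by blast
qed

end
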